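(* Let $\beta>1/2$ and let $Y$ be a random variable with density $g_\beta(x)=c_\beta(1+|x|)^{-2\beta}$, $x\in\mathbb R$. Then for every $1\le p<\infty$ and every smooth $\phi:\mathbb R\to\mathbb R$ with $E[|\phi(Y)|^p]<\infty$, $$E\big[|\phi(Y)-E(\phi(Y))|^p\big]\le\Big(\frac{2p}{2\beta-1}\Big)^p E\big[(1+|Y|)^p|\phi'(Y)|^p\big],$$ and, if moreover $\phi(0)=0$, $$E\big[|\phi(Y)|^p\big]\le\Big(\frac{p}{2\beta-1}\Big)^p E\big[(1+|Y|)^p|\phi'(Y)|^p\big].$$
   Context: $c_\beta>0$ is the normalizing constant making $g_\beta$ a probability density on $\mathbb R$. *)

theory Defs
  imports "HOL-Probability.Probability"
begin

definition cbeta :: "real \<Rightarrow> real" where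
  "cbeta \<beta> = 1 / (LINT x|lborel. (1 + \<bar>x\<bar>) powr (-2 * \<beta>))"

definition gbeta :: "real \<Rightarrow> real \<Rightarrow> real" where
  "gbeta \<beta> x = cbeta \<beta> * (1 + \<bar>x\<bar>) powr (-2 * \<beta>)"

definition smooth_real :: "(real \<Rightarrow> real) \<Rightarrow> bool" where
  "smooth_real f \<longleftrightarrow> (\<forall>n x. ((deriv ^^ n) f) differentiable (at x))"

end

theory Submission
  imports Defs
begin


lemma young_gen:
  fixes a b p l :: real
  assumes "a \<ge> 0" "b \<ge> 0" "p > 1" "l > 0"
  shows "a powr (p-1) * b \<le> ((p-1)/p) * l * a powr p + (1/p) * l powr (1-p) * b powr p"
proof (cases "a = 0 \<or> b = 0")
  case True
  then show ?thesis using assms by (auto intro!: add_nonneg_nonneg mult_nonneg_nonneg)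
next
  case False
  hence a: "a > 0" and b: "b > 0" using assms by auto
  have "(l * a powr p) powr ((p-1)/p) * (l powr (1-p) * b powr p) powr (1/p)
        \<le> ((p-1)/p) * (l * a powr p) + (1/p) * (l powr (1-p) * b powr p)"
    using assms a b by (intro Youngs_inequality_0) (auto simp: field_simps)
  moreover have "(l * a powr p) powr ((p-1)/p) * (l powr (1-p) * b powr p) powr (1/p) = a powr (p-1) * b"
  proof -
    have "(l * a powr p) powr ((p-1)/p) = l powr ((p-1)/p) * a powr (p-1)"
      using assms a by (simp add: powr_mult powr_powr)
    moreover have "(l powr (1-p) * b powr p) powr (1/p) = l powr ((1-p)/p) * b"
      using assms b by (simp add: powr_mult powr_powr)
    moreover have "l powr ((p-1)/p) * l powr ((1-p)/p) = 1"
      using assms by (simp add: powr_add[symmetric] field_simps)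
    ultimately show ?thesis by (simp add: algebra_simps)
  qed
  ultimately show ?thesis by (simp add: algebra_simps)
qed

lemma tangent_ineq:
  fixes x m p :: real
  assumes "x \<ge> 0" "m \<ge> 0" "p \<ge> 1"
  shows "p * m powr (p-1) * x \<le> x powr p + (p-1) * m powr p"
proof (cases "p = 1")
  case True then show ?thesis using assms by auto
next
  case False
  hence p: "p > 1" using assms by auto
  have "m powr (p-1) * x \<le> ((p-1)/p) * 1 * m powr p + (1/p) * 1 powr (1-p) * x powr p"
    using young_gen[of m x p 1] assms p by auto
  hence "p * (m powr (p-1) * x) \<le> p * (((p-1)/p) * m powr p + (1/p) * x powr p)"
    using p by (intro mult_left_mono) auto
  moreover have "p * (((p-1)/p) * m powr p + (1/p) * x powr p) = x powr p + (p-1) * m powr p"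
    using p by (simp add: field_simps)
  ultimately have "p * (m powr (p-1) * x) \<le> x powr p + (p-1) * m powr p" by linarith
  thus ?thesis by (simp only: mult.assoc)
qed

lemma convex_two:
  fixes u v p :: real
  assumes "p \<ge> 1"
  shows "\<bar>u - v\<bar> powr p \<le> 2 powr (p-1) * (\<bar>u\<bar> powr p + \<bar>v\<bar> powr p)"
proof -
  define m where "m = (\<bar>u\<bar> + \<bar>v\<bar>)/2"
  have m: "m \<ge> 0" unfolding m_def by auto
  have 1: "p * m powr (p-1) * \<bar>u\<bar> \<le> \<bar>u\<bar> powr p + (p-1) * m powr p"
    using tangent_ineq[of "\<bar>u\<bar>" m p] assms m by auto
  have 2: "p * m powr (p-1) * \<bar>v\<bar> \<le> \<bar>v\<bar> powr p + (p-1) * m powr p"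
    using tangent_ineq[of "\<bar>v\<bar>" m p] assms m by auto
  have "p * m powr (p-1) * (2*m) = 2 * p * m powr p"
  proof (cases "m = 0")
    case False
    hence "m powr (p-1) * m = m powr p" using m by (simp add: powr_diff)
    thus ?thesis by (simp add: algebra_simps)
  qed simp
  hence "2 * m powr p \<le> \<bar>u\<bar> powr p + \<bar>v\<bar> powr p"
    using 1 2 unfolding m_def by (simp add: algebra_simps)
  moreover have "\<bar>u - v\<bar> powr p \<le> (2*m) powr p"
  proof (rule powr_mono2)
    show "\<bar>u - v\<bar> \<le> 2*m" using abs_triangle_ineq4[of u v] unfolding m_def by simp
  qed (use assms m in auto)
  moreover have "(2*m) powr p = 2 powr (p-1) * (2 * m powr p)"
    using m by (simp add: powr_mult powr_diff)
  ultimately show ?thesis using assms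
    by (smt (verit, ccfv_SIG) mult_left_mono powr_ge_zero)
qed

lemma finish_real:
  fixes a b p K :: real
  assumes p: "p \<ge> 1" and K: "K > 0" and a: "a \<ge> 0" and b: "b \<ge> 0"
    and H: "\<And>l. l > 0 \<Longrightarrow> a \<le> K * ((p-1)/p) * l * a + K / p * l powr (1-p) * b"
  shows "a \<le> K powr p * b"
proof (cases "p = 1")
  case True
  then show ?thesis using H[of 1] K by simp
next
  case False
  hence p1: "p > 1" using p by auto
  show ?thesis
  proof (cases "a = 0")
    case True then show ?thesis using K b by simp
  next
    case False
    hence a0: "a > 0" using a by auto
    show ?thesis
    proof (cases "b = 0")
      case True
      have "a \<le> K * ((p-1)/p) * (p / (2*K*(p-1))) * a"
        using H[of "p / (2*K*(p-1))"] True p1 K by simp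
      also have "\<dots> = a / 2" using p1 K by (simp add: field_simps)
      finally show ?thesis using a0 by simp
    next
      case False
      hence b0: "b > 0" using b by auto
      define \<alpha> where "\<alpha> = a powr (1/p)"
      define \<gamma> where "\<gamma> = b powr (1/p)"
      have al: "\<alpha> > 0" "\<gamma> > 0" using a0 b0 unfolding \<alpha>_def \<gamma>_def by auto
      have aa: "a = \<alpha> powr p" unfolding \<alpha>_def using a0 p1 by (simp add: powr_powr)
      have bb: "b = \<gamma> powr p" unfolding \<gamma>_def using b0 p1 by (simp add: powr_powr)
      have sa: "\<alpha> powr p = \<alpha> powr (p-1) * \<alpha>"
        using al by (simp add: powr_diff)
      have sg: "\<gamma> powr p = \<gamma> powr (p-1) * \<gamma>"
        using al by (simp add: powr_diff)
      define l where "l = \<gamma> / \<alpha>"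
      have l0: "l > 0" using al unfolding l_def by simp
      have e1: "l * a = \<alpha> powr (p-1) * \<gamma>"
        unfolding l_def aa sa using al by simp
      have m1: "\<alpha> powr (1-p) = 1 / \<alpha> powr (p-1)"
        using al by (simp add: powr_minus_divide[symmetric])
      have m2: "\<gamma> powr (1-p) = 1 / \<gamma> powr (p-1)"
        using al by (simp add: powr_minus_divide[symmetric])
      have e2: "l powr (1-p) * b = \<alpha> powr (p-1) * \<gamma>"
        unfolding l_def bb sg using al by (simp add: powr_divide m1 m2)
      have "a \<le> K * ((p-1)/p) * (l * a) + K / p * (l powr (1-p) * b)"
        using H[OF l0] by (simp add: mult.assoc)
      also have "\<dots> = K * (\<alpha> powr (p-1) * \<gamma>)"
        unfolding e1 e2 using p1 by (simp add: field_simps)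
      finally have "\<alpha> powr (p-1) * \<alpha> \<le> \<alpha> powr (p-1) * (K * \<gamma>)"
        using aa sa by (simp add: mult_ac)
      hence "\<alpha> \<le> K * \<gamma>" using al by (simp add: mult_le_cancel_left_pos)
      hence "\<alpha> powr p \<le> (K * \<gamma>) powr p"
        using al p1 by (intro powr_mono2) auto
      thus ?thesis using aa bb K al by (simp add: powr_mult)
    qed
  qed
qed


definition gf :: "real \<Rightarrow> (real \<Rightarrow> real) \<Rightarrow> (real \<Rightarrow> real) \<Rightarrow> real \<Rightarrow> real" where
  "gf p f f' t = p * (if p = 1 then 1 else \<bar>f t\<bar> powr (p-1)) * \<bar>f' t\<bar>"

lemma deriv_abs_powr:
  fixes f :: "real \<Rightarrow> real"
  assumes d: "(f has_real_derivative D) (at t)" and ft: "f t \<noteq> 0" and p: "p > 0"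
  shows "((\<lambda>y. \<bar>f y\<bar> powr p) has_real_derivative p * \<bar>f t\<bar> powr (p-1) * sgn (f t) * D) (at t)"
proof -
  have ct: "isCont f t" using DERIV_continuous[OF d] by simp
  hence lim: "(f \<longlongrightarrow> f t) (nhds t)"
    by (simp add: isCont_def tendsto_at_iff_tendsto_nhds)
  show ?thesis
  proof (cases "f t > 0")
    case True
    have ev: "eventually (\<lambda>y. f y > 0) (nhds t)" using order_tendstoD(1)[OF lim True] by simp
    have "((\<lambda>y. f y powr p) has_real_derivative p * f t powr (p - of_nat 1) * D) (at t)"
      by (rule DERIV_fun_powr[OF d True])
    moreover have "eventually (\<lambda>y. \<bar>f y\<bar> powr p = f y powr p) (nhds t)"
      using ev by eventually_elim auto
    ultimately show ?thesis using True
      by (subst DERIV_cong_ev[OF refl _ refl]) auto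
  next
    case False
    hence neg: "f t < 0" using ft by auto
    have d2: "((\<lambda>y. - f y) has_real_derivative - D) (at t)" using d by (intro derivative_intros)
    have ev: "eventually (\<lambda>y. f y < 0) (nhds t)" using order_tendstoD(2)[OF lim neg] by simp
    have "((\<lambda>y. (- f y) powr p) has_real_derivative p * (- f t) powr (p - of_nat 1) * (- D)) (at t)"
      by (rule DERIV_fun_powr[OF d2]) (use neg in auto)
    moreover have "eventually (\<lambda>y. \<bar>f y\<bar> powr p = (- f y) powr p) (nhds t)"
      using ev by eventually_elim auto
    ultimately show ?thesis using neg
      by (subst DERIV_cong_ev[OF refl _ refl]) auto
  qed
qed

lemma gf_cont:
  fixes f f' :: "real \<Rightarrow> real"
  assumes p: "p \<ge> 1" and cf: "continuous_on UNIV f" and cf': "continuous_on UNIV f'"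
  shows "continuous_on UNIV (gf p f f')"
proof (cases "p = 1")
  case True
  then show ?thesis unfolding gf_def using cf' by (auto intro!: continuous_intros)
next
  case False
  have "continuous_on UNIV (\<lambda>t. \<bar>f t\<bar> powr (p-1))"
    using False p by (intro continuous_on_powr' continuous_intros cf) auto
  then show ?thesis unfolding gf_def using False cf' by (auto intro!: continuous_intros)
qed

lemma gf_nonneg: "p \<ge> 1 \<Longrightarrow> gf p f f' t \<ge> 0"
  unfolding gf_def by auto

lemma pointwise:
  fixes f f' :: "real \<Rightarrow> real"
  assumes p: "p \<ge> 1" and der: "\<And>x. (f has_real_derivative f' x) (at x)"
    and cf': "continuous_on UNIV f'" and f0: "f 0 = 0" and x: "x \<ge> 0"
  shows "\<bar>f x\<bar> powr p \<le> integral {0..x} (gf p f f')"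
proof -
  have cf: "continuous_on UNIV f"
    by (rule continuous_at_imp_continuous_on) (use DERIV_continuous[OF der] in auto)
  have cg: "continuous_on UNIV (gf p f f')" by (rule gf_cont[OF p cf cf'])
  have intg: "gf p f f' integrable_on {c..d}" for c d
    by (rule integrable_continuous_interval) (use cg continuous_on_subset in blast)
  show ?thesis
  proof (cases "f x = 0")
    case True
    then show ?thesis using p by (auto intro!: integral_nonneg intg gf_nonneg)
  next
    case False
    define Z where "Z = {t \<in> {0..x}. f t = 0}"
    have Zne: "0 \<in> Z" using x f0 unfolding Z_def by auto
    have Zbdd: "bdd_above Z" unfolding Z_def by (auto intro: bdd_aboveI[of _ x])
    have Zcl: "closed Z"
    proof -
      have "Z = {0..x} \<inter> f -` {0}" unfolding Z_def by auto
      moreover have "closed ({0..x} \<inter> f -` {0})"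
        by (intro closed_Int closed_vimage) (use cf in \<open>auto simp: continuous_on_eq_continuous_at\<close>)
      ultimately show ?thesis by simp
    qed
    define a where "a = Sup Z"
    have aZ: "a \<in> Z" unfolding a_def using closed_contains_Sup[OF _ Zbdd Zcl] Zne by auto
    hence a0: "0 \<le> a" "a \<le> x" "f a = 0" unfolding Z_def by auto
    have ax: "a < x" using a0 False by (cases "a = x") auto
    have nz: "f t \<noteq> 0" if "a < t" "t \<le> x" for t
    proof
      assume "f t = 0"
      hence "t \<in> Z" using that a0 unfolding Z_def by auto
      hence "t \<le> a" unfolding a_def using Zbdd by (rule cSup_upper)
      thus False using that by simp
    qed
    define d where "d t = p * \<bar>f t\<bar> powr (p-1) * sgn (f t) * f' t" for t
    have cu: "continuous_on {a..x} (\<lambda>t. \<bar>f t\<bar> powr p)"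
      using p by (intro continuous_on_powr' continuous_intros continuous_on_subset[OF cf]) auto
    have "(d has_integral (\<bar>f x\<bar> powr p - \<bar>f a\<bar> powr p)) {a..x}"
    proof (rule fundamental_theorem_of_calculus_interior[OF _ cu])
      fix t assume t: "t \<in> {a<..<x}"
      show "((\<lambda>t. \<bar>f t\<bar> powr p) has_vector_derivative d t) (at t)"
        unfolding d_def has_real_derivative_iff_has_vector_derivative[symmetric]
        using deriv_abs_powr[OF der nz] t p by auto
    qed (use ax in auto)
    hence hd: "(d has_integral \<bar>f x\<bar> powr p) {a..x}" using a0 by simp
    have "\<bar>f x\<bar> powr p \<le> integral {a..x} (gf p f f')"
    proof (rule has_integral_le[OF hd integrable_integral[OF intg]])
      fix t assume t: "t \<in> {a..x}"
      show "d t \<le> gf p f f' t"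
      proof (cases "f t = 0")
        case True then show ?thesis using p by (simp add: d_def gf_nonneg)
      next
        case False
        have "d t \<le> p * \<bar>f t\<bar> powr (p-1) * \<bar>f' t\<bar>"
        proof -
          have "sgn (f t) * f' t \<le> \<bar>f' t\<bar>" by (auto simp: sgn_if)
          hence "(p * \<bar>f t\<bar> powr (p-1)) * (sgn (f t) * f' t) \<le> (p * \<bar>f t\<bar> powr (p-1)) * \<bar>f' t\<bar>"
            using p by (intro mult_left_mono) auto
          thus ?thesis unfolding d_def by (simp add: mult.assoc)
        qed
        also have "\<dots> = gf p f f' t" unfolding gf_def using False by auto
        finally show ?thesis .
      qed
    qed
    also have "\<dots> \<le> integral {0..x} (gf p f f')"
      by (rule integral_subset_le) (use a0 p in \<open>auto intro: intg gf_nonneg\<close>)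
    finally show ?thesis .
  qed
qed



definition W :: "real \<Rightarrow> real \<Rightarrow> real" where
  "W \<beta> x = (1 + \<bar>x\<bar>) powr (-2*\<beta>)"

lemma W_pos: "W \<beta> x > 0" unfolding W_def by simp

lemma step_a:
  fixes f f' :: "real \<Rightarrow> real"
  assumes p: "p \<ge> 1" and der: "\<And>x. (f has_real_derivative f' x) (at x)"
    and cf': "continuous_on UNIV f'" and f0: "f 0 = 0" and x: "x \<ge> 0"
  shows "ennreal (\<bar>f x\<bar> powr p) \<le> (\<integral>\<^sup>+t. ennreal (gf p f f' t) * indicator {0..x} t \<partial>lborel)"
proof -
  have cf: "continuous_on UNIV f"
    by (rule continuous_at_imp_continuous_on) (use DERIV_continuous[OF der] in auto)
  have cg: "continuous_on UNIV (gf p f f')" by (rule gf_cont[OF p cf cf'])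
  have mg[measurable]: "gf p f f' \<in> borel_measurable borel"
    by (rule borel_measurable_continuous_onI[OF cg])
  have "gf p f f' integrable_on {0..x}"
    by (rule integrable_continuous_interval) (use cg continuous_on_subset in blast)
  hence "(gf p f f' has_integral integral {0..x} (gf p f f')) {0..x}" by blast
  hence "((\<lambda>t. if t \<in> {0..x} then gf p f f' t else 0) has_integral integral {0..x} (gf p f f')) UNIV"
    by (subst has_integral_restrict_UNIV)
  moreover have "(\<lambda>t. if t \<in> {0..x} then gf p f f' t else 0) = (\<lambda>t. gf p f f' t * indicator {0..x} t)"
    by (auto simp: indicator_def)
  ultimately have "((\<lambda>t. gf p f f' t * indicator {0..x} t) has_integral integral {0..x} (gf p f f')) UNIV"
    by simp
  hence "(\<integral>\<^sup>+t. ennreal (gf p f f' t * indicator {0..x} t) \<partial>lborel) = integral {0..x} (gf p f f')"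
    by (intro nn_integral_has_integral_lborel) (auto intro!: mult_nonneg_nonneg gf_nonneg p)
  moreover have "(\<integral>\<^sup>+t. ennreal (gf p f f' t * indicator {0..x} t) \<partial>lborel)
     = (\<integral>\<^sup>+t. ennreal (gf p f f' t) * indicator {0..x} t \<partial>lborel)"
    by (intro nn_integral_cong) (auto split: split_indicator)
  ultimately show ?thesis using pointwise[OF p der cf' f0 x] by (simp add: ennreal_leI)
qed

lemma step_b:
  fixes \<beta> t :: real
  assumes b: "\<beta> > 1/2" and t: "t \<ge> 0"
  shows "(\<integral>\<^sup>+x. ennreal (W \<beta> x) * indicator {t..} x \<partial>lborel) = ennreal ((1+t) powr (1-2*\<beta>) / (2*\<beta>-1))"
proof -
  define F where "F x = (-1/(2*\<beta>-1)) * (1+x) powr (1-2*\<beta>)" for x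
  have "(\<integral>\<^sup>+x. ennreal (W \<beta> x) * indicator {t..} x \<partial>lborel) = ennreal (0 - F t)"
  proof (rule nn_integral_FTC_atLeast)
    show "W \<beta> \<in> borel_measurable borel" unfolding W_def by measurable
    fix x assume x: "t \<le> x"
    have "((\<lambda>x. (1+x) powr (1-2*\<beta>)) has_real_derivative (1-2*\<beta>) * (1+x) powr (1-2*\<beta> - of_nat 1) * 1) (at x)"
      by (rule DERIV_fun_powr) (use x t in \<open>auto intro!: derivative_eq_intros\<close>)
    hence "(F has_real_derivative (-1/(2*\<beta>-1)) * ((1-2*\<beta>) * (1+x) powr (1-2*\<beta> - of_nat 1) * 1)) (at x)"
      unfolding F_def by (rule DERIV_cmult)
    moreover have "(-1/(2*\<beta>-1)) * ((1-2*\<beta>) * (1+x) powr (1-2*\<beta> - of_nat 1) * 1) = W \<beta> x"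
      unfolding W_def using b x t by (simp add: field_simps)
    ultimately show "(F has_real_derivative W \<beta> x) (at x)" by simp
    show "0 \<le> W \<beta> x" using W_pos[of \<beta> x] by simp
  next
    have "((\<lambda>x. (1+x) powr (1-2*\<beta>)) \<longlongrightarrow> 0) at_top"
      by (rule tendsto_neg_powr) (use b in \<open>auto intro!: filterlim_tendsto_add_at_top[of "\<lambda>_. 1" 1] filterlim_ident\<close>)
    hence "((\<lambda>x. (-1/(2*\<beta>-1)) * (1+x) powr (1-2*\<beta>)) \<longlongrightarrow> (-1/(2*\<beta>-1)) * 0) at_top"
      by (intro tendsto_intros)
    thus "(F \<longlongrightarrow> 0) at_top" unfolding F_def by simp
  qed
  thus ?thesis unfolding F_def by simp
qed



lemma young_all:
  fixes a b p l :: real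
  assumes "a \<ge> 0" "b \<ge> 0" "p \<ge> 1" "l > 0"
  shows "(if p = 1 then 1 else a powr (p-1)) * b \<le> ((p-1)/p) * l * a powr p + (1/p) * l powr (1-p) * b powr p"
proof (cases "p = 1")
  case True then show ?thesis using assms by simp
next
  case False then show ?thesis using young_gen[of a b p l] assms by simp
qed

lemma pred_tri[measurable]: "Measurable.pred (borel \<Otimes>\<^sub>M borel) (\<lambda>x::real\<times>real. snd x \<in> {0..fst x})"
  unfolding atLeastAtMost_iff by measurable

lemma meas_test:
  fixes h k :: "real \<Rightarrow> real"
  assumes [measurable]: "h \<in> borel_measurable borel" "k \<in> borel_measurable borel"
  shows "case_prod (\<lambda>x t. ennreal (h x) * indicator {0..} x * (ennreal (k t) * indicator {0..x} t)) \<in> borel_measurable (lborel \<Otimes>\<^sub>M lborel)"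
  by measurable



lemma half:
  fixes f f' :: "real \<Rightarrow> real"
  assumes p: "p \<ge> 1" and b: "\<beta> > 1/2" and der: "\<And>x. (f has_real_derivative f' x) (at x)"
    and cf': "continuous_on UNIV f'" and f0: "f 0 = 0"
    and fin: "(\<integral>\<^sup>+x. ennreal (W \<beta> x * \<bar>f x\<bar> powr p) * indicator {0..} x \<partial>lborel) < \<infinity>"
  shows "(\<integral>\<^sup>+x. ennreal (W \<beta> x * \<bar>f x\<bar> powr p) * indicator {0..} x \<partial>lborel)
    \<le> ennreal ((p/(2*\<beta>-1)) powr p) * (\<integral>\<^sup>+x. ennreal (W \<beta> x * ((1+\<bar>x\<bar>) powr p * \<bar>f' x\<bar> powr p)) * indicator {0..} x \<partial>lborel)"
proof -
  define K where "K = p/(2*\<beta>-1)"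
  have K: "K > 0" unfolding K_def using p b by auto
  define A where "A = (\<integral>\<^sup>+x. ennreal (W \<beta> x * \<bar>f x\<bar> powr p) * indicator {0..} x \<partial>lborel)"
  define B where "B = (\<integral>\<^sup>+x. ennreal (W \<beta> x * ((1+\<bar>x\<bar>) powr p * \<bar>f' x\<bar> powr p)) * indicator {0..} x \<partial>lborel)"
  have cf: "continuous_on UNIV f"
    by (rule continuous_at_imp_continuous_on) (use DERIV_continuous[OF der] in auto)
  have [measurable]: "f \<in> borel_measurable borel" by (rule borel_measurable_continuous_onI[OF cf])
  have [measurable]: "f' \<in> borel_measurable borel" by (rule borel_measurable_continuous_onI[OF cf'])
  have [measurable]: "gf p f f' \<in> borel_measurable borel"
    by (rule borel_measurable_continuous_onI[OF gf_cont[OF p cf cf']])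
  have [measurable]: "W \<beta> \<in> borel_measurable borel" unfolding W_def by measurable
  have key: "A \<le> ennreal (K * ((p-1)/p) * l) * A + ennreal (K / p * l powr (1-p)) * B" if l: "l > 0" for l
  proof -
    have "A \<le> (\<integral>\<^sup>+x. ennreal (W \<beta> x) * indicator {0..} x * (\<integral>\<^sup>+t. ennreal (gf p f f' t) * indicator {0..x} t \<partial>lborel) \<partial>lborel)"
      unfolding A_def
    proof (rule nn_integral_mono)
      fix x :: real
      show "ennreal (W \<beta> x * \<bar>f x\<bar> powr p) * indicator {0..} x
        \<le> ennreal (W \<beta> x) * indicator {0..} x * (\<integral>\<^sup>+t. ennreal (gf p f f' t) * indicator {0..x} t \<partial>lborel)"
      proof (cases "x \<ge> 0")
        case True
        have "ennreal (W \<beta> x * \<bar>f x\<bar> powr p) = ennreal (W \<beta> x) * ennreal (\<bar>f x\<bar> powr p)"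
          using W_pos[of \<beta> x] by (simp add: ennreal_mult)
        also have "\<dots> \<le> ennreal (W \<beta> x) * (\<integral>\<^sup>+t. ennreal (gf p f f' t) * indicator {0..x} t \<partial>lborel)"
          by (intro mult_left_mono step_a[OF p der cf' f0 True]) auto
        finally show ?thesis using True by simp
      qed simp
    qed
    also have "\<dots> = (\<integral>\<^sup>+x. (\<integral>\<^sup>+t. ennreal (W \<beta> x) * indicator {0..} x * (ennreal (gf p f f' t) * indicator {0..x} t) \<partial>lborel) \<partial>lborel)"
      by (intro nn_integral_cong nn_integral_cmult[symmetric]) measurable
    also have "\<dots> = (\<integral>\<^sup>+t. (\<integral>\<^sup>+x. ennreal (W \<beta> x) * indicator {0..} x * (ennreal (gf p f f' t) * indicator {0..x} t) \<partial>lborel) \<partial>lborel)"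
      by (rule lborel_pair.Fubini'[symmetric]) measurable
    also have "\<dots> = (\<integral>\<^sup>+t. ennreal (gf p f f' t) * indicator {0..} t * (\<integral>\<^sup>+x. ennreal (W \<beta> x) * indicator {t..} x \<partial>lborel) \<partial>lborel)"
    proof (rule nn_integral_cong)
      fix t :: real
      have "(\<integral>\<^sup>+x. ennreal (W \<beta> x) * indicator {0..} x * (ennreal (gf p f f' t) * indicator {0..x} t) \<partial>lborel)
          = (\<integral>\<^sup>+x. (ennreal (gf p f f' t) * indicator {0..} t) * (ennreal (W \<beta> x) * indicator {t..} x) \<partial>lborel)"
        by (intro nn_integral_cong) (auto split: split_indicator simp: mult_ac)
      also have "\<dots> = ennreal (gf p f f' t) * indicator {0..} t * (\<integral>\<^sup>+x. ennreal (W \<beta> x) * indicator {t..} x \<partial>lborel)"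
        by (rule nn_integral_cmult) measurable
      finally show "(\<integral>\<^sup>+x. ennreal (W \<beta> x) * indicator {0..} x * (ennreal (gf p f f' t) * indicator {0..x} t) \<partial>lborel)
          = ennreal (gf p f f' t) * indicator {0..} t * (\<integral>\<^sup>+x. ennreal (W \<beta> x) * indicator {t..} x \<partial>lborel)" .
    qed
    also have "\<dots> \<le> (\<integral>\<^sup>+t. ennreal (K * ((p-1)/p) * l) * (ennreal (W \<beta> t * \<bar>f t\<bar> powr p) * indicator {0..} t)
          + ennreal (K / p * l powr (1-p)) * (ennreal (W \<beta> t * ((1+\<bar>t\<bar>) powr p * \<bar>f' t\<bar> powr p)) * indicator {0..} t) \<partial>lborel)"
    proof (rule nn_integral_mono)
      fix t :: real
      show "ennreal (gf p f f' t) * indicator {0..} t * (\<integral>\<^sup>+x. ennreal (W \<beta> x) * indicator {t..} x \<partial>lborel)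
        \<le> ennreal (K * ((p-1)/p) * l) * (ennreal (W \<beta> t * \<bar>f t\<bar> powr p) * indicator {0..} t)
          + ennreal (K / p * l powr (1-p)) * (ennreal (W \<beta> t * ((1+\<bar>t\<bar>) powr p * \<bar>f' t\<bar> powr p)) * indicator {0..} t)"
      proof (cases "t \<ge> 0")
        case True
        define e where "e = (if p = 1 then 1 else \<bar>f t\<bar> powr (p-1))"
        have w1: "(1+t) powr (1-2*\<beta>) = (1+t) * W \<beta> t"
          unfolding W_def using True powr_add[of "1+t" 1 "-2*\<beta>"] by simp
        have y: "e * ((1+t) * \<bar>f' t\<bar>) \<le> ((p-1)/p) * l * \<bar>f t\<bar> powr p + (1/p) * l powr (1-p) * ((1+t) * \<bar>f' t\<bar>) powr p"
          unfolding e_def using young_all[of "\<bar>f t\<bar>" "(1+t) * \<bar>f' t\<bar>" p l] True p l by auto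
        have "gf p f f' t * ((1+t) powr (1-2*\<beta>) / (2*\<beta>-1)) = (K * W \<beta> t) * (e * ((1+t) * \<bar>f' t\<bar>))"
          unfolding gf_def e_def w1 K_def by (simp add: field_simps)
        also have "\<dots> \<le> (K * W \<beta> t) * (((p-1)/p) * l * \<bar>f t\<bar> powr p + (1/p) * l powr (1-p) * ((1+t) * \<bar>f' t\<bar>) powr p)"
          using y K W_pos[of \<beta> t] by (intro mult_left_mono) auto
        also have "\<dots> = (K * ((p-1)/p) * l) * (W \<beta> t * \<bar>f t\<bar> powr p) + (K / p * l powr (1-p)) * (W \<beta> t * ((1+\<bar>t\<bar>) powr p * \<bar>f' t\<bar> powr p))"
          using True powr_mult[of "1+t" "\<bar>f' t\<bar>" p] by (simp add: field_simps)
        finally have r: "gf p f f' t * ((1+t) powr (1-2*\<beta>) / (2*\<beta>-1)) \<le> \<dots>" .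
        have "ennreal (gf p f f' t) * indicator {0..} t * (\<integral>\<^sup>+x. ennreal (W \<beta> x) * indicator {t..} x \<partial>lborel)
           = ennreal (gf p f f' t * ((1+t) powr (1-2*\<beta>) / (2*\<beta>-1)))"
          using True step_b[OF b True] by (simp add: ennreal_mult'[OF gf_nonneg[OF p], symmetric])
        also have "\<dots> \<le> ennreal ((K * ((p-1)/p) * l) * (W \<beta> t * \<bar>f t\<bar> powr p) + (K / p * l powr (1-p)) * (W \<beta> t * ((1+\<bar>t\<bar>) powr p * \<bar>f' t\<bar> powr p)))"
          using r by (rule ennreal_leI)
        also have "\<dots> = ennreal (K * ((p-1)/p) * l) * (ennreal (W \<beta> t * \<bar>f t\<bar> powr p) * indicator {0..} t)
          + ennreal (K / p * l powr (1-p)) * (ennreal (W \<beta> t * ((1+\<bar>t\<bar>) powr p * \<bar>f' t\<bar> powr p)) * indicator {0..} t)"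
          using True K p l W_pos[of \<beta> t]
          by (simp add: ennreal_plus[symmetric] ennreal_mult[symmetric] del: ennreal_plus)
        finally show ?thesis .
      qed simp
    qed
    also have "\<dots> = ennreal (K * ((p-1)/p) * l) * A + ennreal (K / p * l powr (1-p)) * B"
      unfolding A_def B_def
      by (subst nn_integral_add) (auto simp: nn_integral_cmult)
    finally show ?thesis .
  qed
  show ?thesis
  proof (cases "B = \<infinity>")
    case True
    have "ennreal ((p/(2*\<beta>-1)) powr p) \<noteq> 0" using p b by simp
    then show ?thesis unfolding B_def[symmetric] using True by (simp add: ennreal_mult_top)
  next
    case False
    obtain bb where bb: "B = ennreal bb" "bb \<ge> 0" using False by (cases B) auto
    obtain aa where aa: "A = ennreal aa" "aa \<ge> 0" using fin unfolding A_def[symmetric] by (cases A) auto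
    have "aa \<le> K powr p * bb"
    proof (rule finish_real[OF p K aa(2) bb(2)])
      fix l :: real assume l: "l > 0"
      have "ennreal aa \<le> ennreal (K * ((p-1)/p) * l * aa + K / p * l powr (1-p) * bb)"
        using key[OF l] aa bb K p l
        by (simp add: ennreal_plus[symmetric] ennreal_mult[symmetric] del: ennreal_plus)
      thus "aa \<le> K * ((p-1)/p) * l * aa + K / p * l powr (1-p) * bb"
        using K p l aa bb by (subst (asm) ennreal_le_iff) (auto intro!: add_nonneg_nonneg mult_nonneg_nonneg)
    qed
    hence "ennreal aa \<le> ennreal (K powr p) * ennreal bb"
      using bb by (subst ennreal_mult[symmetric]) (auto intro: ennreal_leI)
    thus ?thesis unfolding A_def[symmetric] B_def[symmetric] K_def[symmetric] using aa bb by simp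
  qed
qed



lemma reflect_nn:
  fixes F :: "real \<Rightarrow> ennreal"
  assumes [measurable]: "F \<in> borel_measurable borel"
  shows "(\<integral>\<^sup>+x. F x \<partial>lborel) = (\<integral>\<^sup>+x. F (- x) \<partial>lborel)"
  using nn_integral_real_affine[of F "-1" 0] by simp

lemma null0:
  fixes k :: "real \<Rightarrow> ennreal"
  shows "(\<integral>\<^sup>+x. k x * indicator {0} x \<partial>lborel) = 0"
proof -
  have e: "\<And>x::real. k x * indicator {0} x = k 0 * indicator {0} x" by (simp split: split_indicator)
  have "(\<integral>\<^sup>+x. k 0 * indicator {0} x \<partial>lborel) = 0" by (subst nn_integral_cmult_indicator) auto
  thus ?thesis by (simp only: e)
qed

lemma W_neg: "W \<beta> (- x) = W \<beta> x" unfolding W_def by simp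

lemma full:
  fixes f f' :: "real \<Rightarrow> real"
  assumes p: "p \<ge> 1" and b: "\<beta> > 1/2" and der: "\<And>x. (f has_real_derivative f' x) (at x)"
    and cf': "continuous_on UNIV f'" and f0: "f 0 = 0"
    and fin: "(\<integral>\<^sup>+x. ennreal (W \<beta> x * \<bar>f x\<bar> powr p) \<partial>lborel) < \<infinity>"
  shows "(\<integral>\<^sup>+x. ennreal (W \<beta> x * \<bar>f x\<bar> powr p) \<partial>lborel)
    \<le> ennreal ((p/(2*\<beta>-1)) powr p) * (\<integral>\<^sup>+x. ennreal (W \<beta> x * ((1+\<bar>x\<bar>) powr p * \<bar>f' x\<bar> powr p)) \<partial>lborel)"
proof -
  define KK where "KK = ennreal ((p/(2*\<beta>-1)) powr p)"
  define h where "h x = ennreal (W \<beta> x * \<bar>f x\<bar> powr p)" for x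
  define k where "k x = ennreal (W \<beta> x * ((1+\<bar>x\<bar>) powr p * \<bar>f' x\<bar> powr p))" for x
  have cf: "continuous_on UNIV f"
    by (rule continuous_at_imp_continuous_on) (use DERIV_continuous[OF der] in auto)
  have [measurable]: "f \<in> borel_measurable borel" by (rule borel_measurable_continuous_onI[OF cf])
  have [measurable]: "f' \<in> borel_measurable borel" by (rule borel_measurable_continuous_onI[OF cf'])
  have [measurable]: "W \<beta> \<in> borel_measurable borel" unfolding W_def by measurable
  have [measurable]: "h \<in> borel_measurable borel" unfolding h_def by measurable
  have [measurable]: "k \<in> borel_measurable borel" unfolding k_def by measurable
  have derm: "((\<lambda>x. f (- x)) has_real_derivative - f' (- x)) (at x)" for x
    using DERIV_mirror[of f "f' (-x)" x] der[of "-x"] by simp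
  have cfm: "continuous_on UNIV (\<lambda>x. - f' (- x))"
    by (intro continuous_intros continuous_on_compose2[OF cf']) auto
  define A where "A = (\<integral>\<^sup>+x. h x \<partial>lborel)"
  define Ap where "Ap = (\<integral>\<^sup>+x. h x * indicator {0..} x \<partial>lborel)"
  define Am where "Am = (\<integral>\<^sup>+x. h (- x) * indicator {0..} x \<partial>lborel)"
  define Bp where "Bp = (\<integral>\<^sup>+x. k x * indicator {0..} x \<partial>lborel)"
  define Bm where "Bm = (\<integral>\<^sup>+x. k (- x) * indicator {0..} x \<partial>lborel)"
  have A_split: "A = Ap + (\<integral>\<^sup>+x. h x * indicator {..<0} x \<partial>lborel)"
    unfolding A_def Ap_def
    by (subst nn_integral_add[symmetric]) (auto intro!: nn_integral_cong split: split_indicator)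
  have "(\<integral>\<^sup>+x. h x * indicator {..<0} x \<partial>lborel) = (\<integral>\<^sup>+x. h (-x) * indicator {..<0} (-x) \<partial>lborel)"
    by (rule reflect_nn) measurable
  also have "\<dots> \<le> Am" unfolding Am_def
    by (intro nn_integral_mono) (auto split: split_indicator)
  finally have Am_ge: "(\<integral>\<^sup>+x. h x * indicator {..<0} x \<partial>lborel) \<le> Am" .
  have Ap_le: "Ap \<le> A" unfolding Ap_def A_def
    by (intro nn_integral_mono) (auto split: split_indicator)
  have "Am = (\<integral>\<^sup>+x. h (- (- x)) * indicator {0..} (- x) \<partial>lborel)"
    unfolding Am_def by (rule reflect_nn) measurable
  also have "\<dots> \<le> A" unfolding A_def
    by (intro nn_integral_mono) (auto split: split_indicator)
  finally have Am_le: "Am \<le> A" .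
  have hp: "Ap \<le> KK * Bp"
    unfolding Ap_def Bp_def KK_def h_def k_def
    by (rule half[OF p b der cf' f0]) (use Ap_le fin in \<open>simp add: Ap_def A_def h_def\<close>)
  have hm: "Am \<le> KK * Bm"
  proof -
    have "Am = (\<integral>\<^sup>+x. ennreal (W \<beta> x * \<bar>f (- x)\<bar> powr p) * indicator {0..} x \<partial>lborel)"
      unfolding Am_def h_def by (simp add: W_neg)
    also have "\<dots> \<le> KK * (\<integral>\<^sup>+x. ennreal (W \<beta> x * ((1+\<bar>x\<bar>) powr p * \<bar>- f' (- x)\<bar> powr p)) * indicator {0..} x \<partial>lborel)"
      unfolding KK_def
      by (rule half[OF p b derm cfm]) (use Am_le fin f0 in \<open>simp_all add: Am_def A_def h_def W_neg\<close>)
    also have "\<dots> = KK * Bm" unfolding Bm_def k_def by (simp add: W_neg)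
    finally show ?thesis .
  qed
  have "Bm = (\<integral>\<^sup>+x. k (- (- x)) * indicator {0..} (- x) \<partial>lborel)"
    unfolding Bm_def by (rule reflect_nn) measurable
  also have "\<dots> = (\<integral>\<^sup>+x. k x * indicator {..0} x \<partial>lborel)"
    by (intro nn_integral_cong) (auto split: split_indicator)
  finally have Bm_eq: "Bm = (\<integral>\<^sup>+x. k x * indicator {..0} x \<partial>lborel)" .
  have "Bp + Bm = (\<integral>\<^sup>+x. k x + k x * indicator {0} x \<partial>lborel)"
    unfolding Bp_def Bm_eq
    by (subst nn_integral_add[symmetric]) (auto intro!: nn_integral_cong split: split_indicator)
  also have "\<dots> = (\<integral>\<^sup>+x. k x \<partial>lborel)"
    by (subst nn_integral_add) (auto simp: null0)
  finally have B_eq: "Bp + Bm = (\<integral>\<^sup>+x. k x \<partial>lborel)" .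
  have "A \<le> Ap + Am" using A_split Am_ge by (simp add: add_left_mono)
  also have "\<dots> \<le> KK * Bp + KK * Bm" using hp hm by (rule add_mono)
  also have "\<dots> = KK * (\<integral>\<^sup>+x. k x \<partial>lborel)" by (simp add: B_eq[symmetric] distrib_left)
  finally show ?thesis unfolding A_def h_def k_def KK_def .
qed



lemma conv:
  fixes M :: "'a measure" and Y :: "'a \<Rightarrow> real" and H :: "real \<Rightarrow> real"
  assumes Y: "distributed M lborel Y (\<lambda>x. ennreal (gbeta \<beta> x))"
    and Hm: "H \<in> borel_measurable borel" and Hn: "\<And>x. H x \<ge> 0"
  shows "(\<integral>\<^sup>+\<omega>. ennreal (H (Y \<omega>)) \<partial>M) = ennreal (cbeta \<beta>) * (\<integral>\<^sup>+x. ennreal (W \<beta> x * H x) \<partial>lborel)"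
proof -
  have "(\<integral>\<^sup>+\<omega>. ennreal (H (Y \<omega>)) \<partial>M) = (\<integral>\<^sup>+x. ennreal (gbeta \<beta> x) * ennreal (H x) \<partial>lborel)"
    by (rule distributed_nn_integral[OF Y, symmetric]) (use Hm in simp)
  also have "\<dots> = (\<integral>\<^sup>+x. ennreal (cbeta \<beta>) * ennreal (W \<beta> x * H x) \<partial>lborel)"
  proof (rule nn_integral_cong)
    fix x
    have "ennreal (gbeta \<beta> x) * ennreal (H x) = ennreal (gbeta \<beta> x * H x)"
      using Hn by (simp add: ennreal_mult'')
    also have "\<dots> = ennreal (cbeta \<beta> * (W \<beta> x * H x))"
      unfolding gbeta_def W_def by (simp add: mult_ac)
    also have "\<dots> = ennreal (cbeta \<beta>) * ennreal (W \<beta> x * H x)"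
      using Hn W_pos[of \<beta> x] by (intro ennreal_mult'') simp
    finally show "ennreal (gbeta \<beta> x) * ennreal (H x) = ennreal (cbeta \<beta>) * ennreal (W \<beta> x * H x)" .
  qed
  also have "\<dots> = ennreal (cbeta \<beta>) * (\<integral>\<^sup>+x. ennreal (W \<beta> x * H x) \<partial>lborel)"
    by (rule nn_integral_cmult) (use Hm in \<open>simp add: W_def\<close>)
  finally show ?thesis .
qed

lemma core2:
  fixes M :: "'a measure" and Y :: "'a \<Rightarrow> real" and f f' :: "real \<Rightarrow> real"
  assumes Y: "distributed M lborel Y (\<lambda>x. ennreal (gbeta \<beta> x))"
    and p: "p \<ge> 1" and b: "\<beta> > 1/2" and der: "\<And>x. (f has_real_derivative f' x) (at x)"
    and cf': "continuous_on UNIV f'" and f0: "f 0 = 0"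
    and fin: "(\<integral>\<^sup>+ \<omega>. ennreal (\<bar>f (Y \<omega>)\<bar> powr p) \<partial>M) < \<infinity>"
  shows "(\<integral>\<^sup>+ \<omega>. ennreal (\<bar>f (Y \<omega>)\<bar> powr p) \<partial>M)
     \<le> ennreal ((p / (2 * \<beta> - 1)) powr p) * (\<integral>\<^sup>+ \<omega>. ennreal ((1 + \<bar>Y \<omega>\<bar>) powr p * \<bar>f' (Y \<omega>)\<bar> powr p) \<partial>M)"
proof -
  have cf: "continuous_on UNIV f"
    by (rule continuous_at_imp_continuous_on) (use DERIV_continuous[OF der] in auto)
  have [measurable]: "f \<in> borel_measurable borel" by (rule borel_measurable_continuous_onI[OF cf])
  have [measurable]: "f' \<in> borel_measurable borel" by (rule borel_measurable_continuous_onI[OF cf'])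
  define c where "c = ennreal (cbeta \<beta>)"
  define A where "A = (\<integral>\<^sup>+x. ennreal (W \<beta> x * \<bar>f x\<bar> powr p) \<partial>lborel)"
  define B where "B = (\<integral>\<^sup>+x. ennreal (W \<beta> x * ((1+\<bar>x\<bar>) powr p * \<bar>f' x\<bar> powr p)) \<partial>lborel)"
  have eA: "(\<integral>\<^sup>+ \<omega>. ennreal (\<bar>f (Y \<omega>)\<bar> powr p) \<partial>M) = c * A"
    unfolding c_def A_def by (rule conv[OF Y, of "\<lambda>x. \<bar>f x\<bar> powr p"]) auto
  have eB: "(\<integral>\<^sup>+ \<omega>. ennreal ((1 + \<bar>Y \<omega>\<bar>) powr p * \<bar>f' (Y \<omega>)\<bar> powr p) \<partial>M) = c * B"
    unfolding c_def B_def by (rule conv[OF Y, of "\<lambda>x. (1 + \<bar>x\<bar>) powr p * \<bar>f' x\<bar> powr p"]) auto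
  show ?thesis
  proof (cases "c = 0")
    case True then show ?thesis unfolding eA eB by simp
  next
    case False
    have "A < \<infinity>" using fin False unfolding eA
      by (auto simp: ennreal_mult_less_top top.not_eq_extremum)
    hence "A \<le> ennreal ((p / (2 * \<beta> - 1)) powr p) * B"
      unfolding A_def B_def by (rule full[OF p b der cf' f0])
    hence "c * A \<le> c * (ennreal ((p / (2 * \<beta> - 1)) powr p) * B)" by (rule mult_left_mono) simp
    thus ?thesis unfolding eA eB by (simp add: mult_ac)
  qed
qed



lemma le_one_plus_powr: "p \<ge> 1 \<Longrightarrow> \<bar>y::real\<bar> \<le> 1 + \<bar>y\<bar> powr p"
proof (cases "\<bar>y\<bar> \<le> 1")
  case False
  assume p: "p \<ge> 1"
  have "\<bar>y\<bar> powr 1 \<le> \<bar>y\<bar> powr p" using False p by (intro powr_mono) auto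
  thus ?thesis by simp
qed (smt (verit) powr_ge_zero)

theorem mainTheorem10:
  fixes M :: "'a measure" and Y :: "'a \<Rightarrow> real"
    and \<beta> p :: real and \<phi> :: "real \<Rightarrow> real"
  assumes beta: "\<beta> > 1/2"
    and M: "prob_space M"
    and Y: "distributed M lborel Y (\<lambda>x. ennreal (gbeta \<beta> x))"
    and p: "1 \<le> p"
    and smooth: "smooth_real \<phi>"
    and fin: "(\<integral>\<^sup>+ \<omega>. ennreal (\<bar>\<phi> (Y \<omega>)\<bar> powr p) \<partial>M) < \<infinity>"
  shows "((\<integral>\<^sup>+ \<omega>. ennreal (\<bar>\<phi> (Y \<omega>) - (\<integral> \<omega>'. \<phi> (Y \<omega>') \<partial>M)\<bar> powr p) \<partial>M)
           \<le> ennreal ((2 * p / (2 * \<beta> - 1)) powr p)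
              * (\<integral>\<^sup>+ \<omega>. ennreal ((1 + \<bar>Y \<omega>\<bar>) powr p * \<bar>deriv \<phi> (Y \<omega>)\<bar> powr p) \<partial>M))
         \<and> (\<phi> 0 = 0 \<longrightarrow>
           (\<integral>\<^sup>+ \<omega>. ennreal (\<bar>\<phi> (Y \<omega>)\<bar> powr p) \<partial>M)
           \<le> ennreal ((p / (2 * \<beta> - 1)) powr p)
              * (\<integral>\<^sup>+ \<omega>. ennreal ((1 + \<bar>Y \<omega>\<bar>) powr p * \<bar>deriv \<phi> (Y \<omega>)\<bar> powr p) \<partial>M))"
proof -
  interpret prob_space M by (rule M)
  have d0: "\<phi> differentiable (at x)" for x
    using smooth unfolding smooth_real_def by (metis funpow_0)
  have d1: "deriv \<phi> differentiable (at x)" for x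
    using smooth unfolding smooth_real_def by (metis One_nat_def funpow.simps(2) funpow_0 o_apply)
  have der: "(\<phi> has_real_derivative deriv \<phi> x) (at x)" for x
    using d0 DERIV_deriv_iff_real_differentiable by blast
  have cf': "continuous_on UNIV (deriv \<phi>)"
    by (rule continuous_at_imp_continuous_on) (use differentiable_imp_continuous_within[OF d1] in auto)
  have cf: "continuous_on UNIV \<phi>"
    by (rule continuous_at_imp_continuous_on) (use DERIV_continuous[OF der] in auto)
  have [measurable]: "\<phi> \<in> borel_measurable borel" by (rule borel_measurable_continuous_onI[OF cf])
  have [measurable]: "Y \<in> measurable M lborel" using Y by (rule distributed_measurable)
  have Ym[measurable]: "Y \<in> borel_measurable M" using distributed_measurable[OF Y] by simp
  define B where "B = (\<integral>\<^sup>+ \<omega>. ennreal ((1 + \<bar>Y \<omega>\<bar>) powr p * \<bar>deriv \<phi> (Y \<omega>)\<bar> powr p) \<partial>M)"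
  define K where "K = p / (2 * \<beta> - 1)"
  have part2: "\<phi> 0 = 0 \<longrightarrow> (\<integral>\<^sup>+ \<omega>. ennreal (\<bar>\<phi> (Y \<omega>)\<bar> powr p) \<partial>M) \<le> ennreal (K powr p) * B"
    unfolding B_def K_def using core2[OF Y p beta der cf' _ fin] by blast
  define \<psi> where "\<psi> x = \<phi> x - \<phi> 0" for x
  have der\<psi>: "(\<psi> has_real_derivative deriv \<phi> x) (at x)" for x
    unfolding \<psi>_def using der[of x] by (auto intro!: derivative_eq_intros)
  have [measurable]: "\<psi> \<in> borel_measurable borel" unfolding \<psi>_def by measurable
  have int\<phi>: "integrable M (\<lambda>\<omega>. \<phi> (Y \<omega>))"
  proof (rule integrableI_bounded)
    have "(\<integral>\<^sup>+\<omega>. ennreal (norm (\<phi> (Y \<omega>))) \<partial>M) \<le> (\<integral>\<^sup>+\<omega>. 1 + ennreal (\<bar>\<phi> (Y \<omega>)\<bar> powr p) \<partial>M)"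
    proof (intro nn_integral_mono)
      fix \<omega>
      have "ennreal (norm (\<phi> (Y \<omega>))) \<le> ennreal (1 + \<bar>\<phi> (Y \<omega>)\<bar> powr p)"
        using le_one_plus_powr[OF p] by (intro ennreal_leI) simp
      also have "\<dots> = 1 + ennreal (\<bar>\<phi> (Y \<omega>)\<bar> powr p)" by (simp add: ennreal_plus)
      finally show "ennreal (norm (\<phi> (Y \<omega>))) \<le> 1 + ennreal (\<bar>\<phi> (Y \<omega>)\<bar> powr p)" .
    qed
    also have "\<dots> = 1 + (\<integral>\<^sup>+\<omega>. ennreal (\<bar>\<phi> (Y \<omega>)\<bar> powr p) \<partial>M)"
      by (subst nn_integral_add) (auto simp: emeasure_space_1)
    also have "\<dots> < \<infinity>" using fin by simp
    finally show "(\<integral>\<^sup>+\<omega>. ennreal (norm (\<phi> (Y \<omega>))) \<partial>M) < \<infinity>" .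
  qed measurable
  define E where "E = (\<integral> \<omega>'. \<phi> (Y \<omega>') \<partial>M)"
  define m where "m = E - \<phi> 0"
  have int\<psi>: "integrable M (\<lambda>\<omega>. \<psi> (Y \<omega>))" unfolding \<psi>_def using int\<phi> by auto
  have m_eq: "m = (\<integral>\<omega>. \<psi> (Y \<omega>) \<partial>M)"
    unfolding m_def E_def \<psi>_def using int\<phi> by (simp add: prob_space)
  define A\<psi> where "A\<psi> = (\<integral>\<^sup>+ \<omega>. ennreal (\<bar>\<psi> (Y \<omega>)\<bar> powr p) \<partial>M)"
  have A\<psi>_fin: "A\<psi> < \<infinity>"
  proof -
    have "A\<psi> \<le> (\<integral>\<^sup>+ \<omega>. ennreal (2 powr (p-1)) * (ennreal (\<bar>\<phi> (Y \<omega>)\<bar> powr p) + ennreal (\<bar>\<phi> 0\<bar> powr p)) \<partial>M)"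
      unfolding A\<psi>_def \<psi>_def
      by (intro nn_integral_mono)
        (simp add: convex_two[OF p] ennreal_plus[symmetric] ennreal_mult[symmetric] del: ennreal_plus)
    also have "\<dots> = ennreal (2 powr (p-1)) * ((\<integral>\<^sup>+ \<omega>. ennreal (\<bar>\<phi> (Y \<omega>)\<bar> powr p) \<partial>M) + ennreal (\<bar>\<phi> 0\<bar> powr p))"
      by (subst nn_integral_cmult) (auto simp: nn_integral_add emeasure_space_1)
    also have "\<dots> < \<infinity>" using fin by (simp add: ennreal_mult_less_top)
    finally show ?thesis .
  qed
  have intp: "integrable M (\<lambda>\<omega>. \<bar>\<psi> (Y \<omega>)\<bar> powr p)"
    by (rule integrableI_bounded) (use A\<psi>_fin in \<open>simp_all add: A\<psi>_def\<close>)
  have A\<psi>_eq: "A\<psi> = ennreal (\<integral>\<omega>. \<bar>\<psi> (Y \<omega>)\<bar> powr p \<partial>M)"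
    unfolding A\<psi>_def by (rule nn_integral_eq_integral[OF intp]) simp
  have jensen: "ennreal (\<bar>m\<bar> powr p) \<le> A\<psi>"
  proof -
    define \<mu> where "\<mu> = (\<integral>\<omega>. \<bar>\<psi> (Y \<omega>)\<bar> \<partial>M)"
    have m\<mu>: "\<bar>m\<bar> \<le> \<mu>" unfolding m_eq \<mu>_def by simp
    have \<mu>0: "\<mu> \<ge> 0" unfolding \<mu>_def by simp
    have "\<mu> powr p \<le> (\<integral>\<omega>. \<bar>\<psi> (Y \<omega>)\<bar> powr p \<partial>M)"
    proof (cases "\<mu> = 0")
      case False
      have "(\<integral>\<omega>. p * \<mu> powr (p-1) * \<bar>\<psi> (Y \<omega>)\<bar> \<partial>M) \<le> (\<integral>\<omega>. \<bar>\<psi> (Y \<omega>)\<bar> powr p + (p-1) * \<mu> powr p \<partial>M)"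
        using tangent_ineq[OF _ \<mu>0 p] int\<psi> intp by (intro integral_mono) auto
      hence "p * \<mu> powr (p-1) * \<mu> \<le> (\<integral>\<omega>. \<bar>\<psi> (Y \<omega>)\<bar> powr p \<partial>M) + (p-1) * \<mu> powr p"
        using int\<psi> intp unfolding \<mu>_def by (simp add: prob_space)
      moreover have "\<mu> powr (p-1) * \<mu> = \<mu> powr p" using False \<mu>0 by (simp add: powr_diff)
      ultimately have "p * \<mu> powr p \<le> (\<integral>\<omega>. \<bar>\<psi> (Y \<omega>)\<bar> powr p \<partial>M) + (p-1) * \<mu> powr p"
        by (simp add: mult.assoc)
      moreover have "(p-1) * \<mu> powr p = p * \<mu> powr p - \<mu> powr p" by (simp add: algebra_simps)
      ultimately show ?thesis by linarith
    qed (use p integral_nonneg_AE in auto)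
    moreover have "\<bar>m\<bar> powr p \<le> \<mu> powr p" using m\<mu> p by (intro powr_mono2) auto
    ultimately show ?thesis unfolding A\<psi>_eq by (intro ennreal_leI) simp
  qed
  have "(\<integral>\<^sup>+ \<omega>. ennreal (\<bar>\<phi> (Y \<omega>) - E\<bar> powr p) \<partial>M)
      \<le> (\<integral>\<^sup>+ \<omega>. ennreal (2 powr (p-1)) * (ennreal (\<bar>\<psi> (Y \<omega>)\<bar> powr p) + ennreal (\<bar>m\<bar> powr p)) \<partial>M)"
  proof (intro nn_integral_mono)
    fix \<omega>
    have "\<phi> (Y \<omega>) - E = \<psi> (Y \<omega>) - m" unfolding \<psi>_def m_def by simp
    thus "ennreal (\<bar>\<phi> (Y \<omega>) - E\<bar> powr p) \<le> ennreal (2 powr (p-1)) * (ennreal (\<bar>\<psi> (Y \<omega>)\<bar> powr p) + ennreal (\<bar>m\<bar> powr p))"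
      by (simp add: convex_two[OF p] ennreal_plus[symmetric] ennreal_mult[symmetric] del: ennreal_plus)
  qed
  also have "\<dots> = ennreal (2 powr (p-1)) * (A\<psi> + ennreal (\<bar>m\<bar> powr p))"
    unfolding A\<psi>_def by (subst nn_integral_cmult) (auto simp: nn_integral_add emeasure_space_1)
  also have "\<dots> \<le> ennreal (2 powr (p-1)) * (A\<psi> + A\<psi>)"
    using jensen by (intro mult_left_mono add_left_mono) auto
  also have "\<dots> = ennreal (2 powr p) * A\<psi>"
  proof -
    have "ennreal (2 powr (p-1)) * (A\<psi> + A\<psi>) = ennreal (2 powr (p-1)) * ennreal 2 * A\<psi>"
      by (simp add: mult_2[symmetric] mult_ac)
    also have "ennreal (2 powr (p-1)) * ennreal 2 = ennreal (2 powr p)"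
    proof -
      have "ennreal (2 powr (p-1)) * ennreal 2 = ennreal (2 powr (p-1) * 2)" by (simp add: ennreal_mult)
      also have "2 powr (p-1) * 2 = (2::real) powr p" by (simp add: powr_diff)
      finally show ?thesis .
    qed
    finally show ?thesis .
  qed
  also have "\<dots> \<le> ennreal (2 powr p) * (ennreal (K powr p) * B)"
  proof (intro mult_left_mono)
    show "A\<psi> \<le> ennreal (K powr p) * B"
      unfolding A\<psi>_def B_def K_def
      by (rule core2[OF Y p beta der\<psi> cf']) (use A\<psi>_fin in \<open>simp_all add: \<psi>_def A\<psi>_def\<close>)
  qed simp
  also have "\<dots> = ennreal ((2 * p / (2 * \<beta> - 1)) powr p) * B"
    unfolding K_def using p beta
    by (simp add: mult.assoc[symmetric] ennreal_mult[symmetric] powr_mult[symmetric] times_divide_eq_right)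
  finally show ?thesis using part2 unfolding E_def B_def K_def by simp
qed


end
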